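(* Let $F$ be a finite field of odd characteristic in which $-1$ is not a square, fix $C_0\ge1$, and let $A\subseteq F^2$ be $k$-regular (with constant $C_0$). Then $$\mathcal{R}(A)\lesssim |A|^2\,k,$$ with implied constant depending only on $C_0$.
   Context: For $x\cdot y=x_1y_1+x_2y_2$ on $F^2$: $(x_0,x_1,x_2)\in(F^2)^3$ is a corner if $(x_1-x_0)\cdot(x_2-x_1)=0$; $(x_0,x_1,x_2,x_3)\in(F^2)^4$ is a rectangle if $(x_i,x_{i+1},x_{i+2})$ is a corner for each $i\in\{0,1,2,3\}$, indices mod 4; $\mathcal{R}(A)$ is the number of rectangles in $A^4$. A line in $F^2$ is $\{p+tv:t\in F\}$ with $v\ne0$. $A$ is $k$-regular (with constant $C_0$) if $k\le C_0|A|^{1/2}$ and there exist a set $L$ of lines with $k/C_0\le|L|\le C_0k$ and a partition $A=\bigsqcup_{\ell\in L}A_\ell$ with $A_\ell\subseteq\ell$ and $|A|/(C_0k)\le|A_\ell|\le C_0|A|/k$ for each $\ell\in L$. *)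

theory Defs
  imports "HOL-Algebra.Ring" "HOL-Algebra.Ring_Divisibility" Complex_Main
begin

definition odd_char :: "('a, 'b) ring_scheme \<Rightarrow> bool" where
  "odd_char R \<longleftrightarrow> \<one>\<^bsub>R\<^esub> \<oplus>\<^bsub>R\<^esub> \<one>\<^bsub>R\<^esub> \<noteq> \<zero>\<^bsub>R\<^esub>"

definition dotp :: "('a, 'b) ring_scheme \<Rightarrow> 'a \<times> 'a \<Rightarrow> 'a \<times> 'a \<Rightarrow> 'a" where
  "dotp R x y = (fst x \<otimes>\<^bsub>R\<^esub> fst y) \<oplus>\<^bsub>R\<^esub> (snd x \<otimes>\<^bsub>R\<^esub> snd y)"

definition vsub :: "('a, 'b) ring_scheme \<Rightarrow> 'a \<times> 'a \<Rightarrow> 'a \<times> 'a \<Rightarrow> 'a \<times> 'a" where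
  "vsub R x y = (fst x \<ominus>\<^bsub>R\<^esub> fst y, snd x \<ominus>\<^bsub>R\<^esub> snd y)"

definition corner :: "('a, 'b) ring_scheme \<Rightarrow> 'a \<times> 'a \<Rightarrow> 'a \<times> 'a \<Rightarrow> 'a \<times> 'a \<Rightarrow> bool" where
  "corner R x0 x1 x2 \<longleftrightarrow> dotp R (vsub R x1 x0) (vsub R x2 x1) = \<zero>\<^bsub>R\<^esub>"

definition rectangle :: "('a, 'b) ring_scheme \<Rightarrow> 'a \<times> 'a \<Rightarrow> 'a \<times> 'a \<Rightarrow> 'a \<times> 'a \<Rightarrow> 'a \<times> 'a \<Rightarrow> bool" where
  "rectangle R x0 x1 x2 x3 \<longleftrightarrow>
     corner R x0 x1 x2 \<and> corner R x1 x2 x3 \<and> corner R x2 x3 x0 \<and> corner R x3 x0 x1"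

definition rect_count :: "('a, 'b) ring_scheme \<Rightarrow> ('a \<times> 'a) set \<Rightarrow> nat" where
  "rect_count R A = card {(x0, x1, x2, x3). x0 \<in> A \<and> x1 \<in> A \<and> x2 \<in> A \<and> x3 \<in> A \<and>
                            rectangle R x0 x1 x2 x3}"

definition is_line :: "('a, 'b) ring_scheme \<Rightarrow> ('a \<times> 'a) set \<Rightarrow> bool" where
  "is_line R l \<longleftrightarrow> (\<exists>p v. p \<in> carrier R \<times> carrier R \<and> v \<in> carrier R \<times> carrier R \<and>
       v \<noteq> (\<zero>\<^bsub>R\<^esub>, \<zero>\<^bsub>R\<^esub>) \<and>
       l = {(fst p \<oplus>\<^bsub>R\<^esub> t \<otimes>\<^bsub>R\<^esub> fst v, snd p \<oplus>\<^bsub>R\<^esub> t \<otimes>\<^bsub>R\<^esub> snd v) | t. t \<in> carrier R})"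

definition k_regular :: "('a, 'b) ring_scheme \<Rightarrow> real \<Rightarrow> real \<Rightarrow> ('a \<times> 'a) set \<Rightarrow> bool" where
  "k_regular R C0 k A \<longleftrightarrow>
     k \<le> C0 * sqrt (real (card A)) \<and>
     (\<exists>L P. (\<forall>l\<in>L. is_line R l) \<and>
            k / C0 \<le> real (card L) \<and> real (card L) \<le> C0 * k \<and>
            A = (\<Union>l\<in>L. P l) \<and>
            (\<forall>l\<in>L. \<forall>l'\<in>L. l \<noteq> l' \<longrightarrow> P l \<inter> P l' = {}) \<and>
            (\<forall>l\<in>L. P l \<subseteq> l \<and>
                    real (card A) / (C0 * k) \<le> real (card (P l)) \<and>
                    real (card (P l)) \<le> C0 * real (card A) / k))"

end

theory Submission
  imports Defs
begin

context field begin

lemma sq_sum_zero: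
  assumes ns: "\<not> (\<exists>x\<in>carrier R. x \<otimes> x = \<ominus> \<one>)"
    and a: "a \<in> carrier R" and b: "b \<in> carrier R" and h: "a \<otimes> a \<oplus> b \<otimes> b = \<zero>"
  shows "a = \<zero> \<and> b = \<zero>"
proof (cases "b = \<zero>")
  case True
  then have "a \<otimes> a = \<zero>" using h a by simp
  then show ?thesis using True a integral by blast
next
  case False
  have bu: "b \<in> Units R" using False b field_Units by blast
  have ib: "inv b \<in> carrier R" using bu by simp
  have binv: "b \<otimes> inv b = \<one>" using bu by simp
  have aa: "a \<otimes> a = \<ominus> (b \<otimes> b)"
  proof -
    have "a \<otimes> a = (a \<otimes> a \<oplus> b \<otimes> b) \<ominus> b \<otimes> b" using a b by Ring.algebra
    also have "\<dots> = \<ominus> (b \<otimes> b)" using h a b by (simp add: minus_eq)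
    finally show ?thesis .
  qed
  have "(a \<otimes> inv b) \<otimes> (a \<otimes> inv b) = (a \<otimes> a) \<otimes> (inv b \<otimes> inv b)" using a ib by Ring.algebra
  also have "\<dots> = \<ominus> ((b \<otimes> inv b) \<otimes> (b \<otimes> inv b))" unfolding aa using b ib by Ring.algebra
  also have "\<dots> = \<ominus> \<one>" using binv by simp
  finally have "(a \<otimes> inv b) \<otimes> (a \<otimes> inv b) = \<ominus> \<one>" .
  moreover have "a \<otimes> inv b \<in> carrier R" using a ib by simp
  ultimately show ?thesis using ns by blast
qed

lemma coord_id:
  assumes "v \<in> carrier R" "w \<in> carrier R" "s \<in> carrier R"
  shows "(s \<oplus> v) \<otimes> (s \<oplus> v) = \<ominus> (s \<otimes> (\<ominus> (v \<oplus> w \<oplus> s))) \<ominus> (w \<otimes> s)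
     \<ominus> ((\<ominus> (v \<oplus> w \<oplus> s)) \<otimes> v) \<ominus> (v \<otimes> w)"
  using assms by Ring.algebra

lemma lin_id:
  assumes "X1 \<in> carrier R" "X2 \<in> carrier R" "Y1 \<in> carrier R" "Y2 \<in> carrier R"
    "Z1 \<in> carrier R" "Z2 \<in> carrier R" "T1 \<in> carrier R" "T2 \<in> carrier R"
  shows "(\<ominus> X1 \<ominus> Y1 \<ominus> Z1 \<ominus> T1) \<oplus> (\<ominus> X2 \<ominus> Y2 \<ominus> Z2 \<ominus> T2)
     = \<ominus> (X1 \<oplus> X2) \<ominus> (Y1 \<oplus> Y2) \<ominus> (Z1 \<oplus> Z2) \<ominus> (T1 \<oplus> T2)"
  using assms by Ring.algebra

lemma rect_aux:
  assumes c: "a0 \<in> carrier R" "b0 \<in> carrier R" "a1 \<in> carrier R" "b1 \<in> carrier R"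
     "a2 \<in> carrier R" "b2 \<in> carrier R" "a3 \<in> carrier R" "b3 \<in> carrier R"
    and ns: "\<not> (\<exists>x\<in>carrier R. x \<otimes> x = \<ominus> \<one>)"
    and h1: "(a1 \<ominus> a0) \<otimes> (a2 \<ominus> a1) \<oplus> (b1 \<ominus> b0) \<otimes> (b2 \<ominus> b1) = \<zero>"
    and h2: "(a2 \<ominus> a1) \<otimes> (a3 \<ominus> a2) \<oplus> (b2 \<ominus> b1) \<otimes> (b3 \<ominus> b2) = \<zero>"
    and h3: "(a3 \<ominus> a2) \<otimes> (a0 \<ominus> a3) \<oplus> (b3 \<ominus> b2) \<otimes> (b0 \<ominus> b3) = \<zero>"
    and h4: "(a0 \<ominus> a3) \<otimes> (a1 \<ominus> a0) \<oplus> (b0 \<ominus> b3) \<otimes> (b1 \<ominus> b0) = \<zero>"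
  shows "a3 = a2 \<ominus> a1 \<oplus> a0 \<and> b3 = b2 \<ominus> b1 \<oplus> b0"
proof -
  define v1 where "v1 = a1 \<ominus> a0"
  define w1 where "w1 = a2 \<ominus> a1"
  define s1 where "s1 = a3 \<ominus> a2"
  define v2 where "v2 = b1 \<ominus> b0"
  define w2 where "w2 = b2 \<ominus> b1"
  define s2 where "s2 = b3 \<ominus> b2"
  have cv: "v1 \<in> carrier R" "w1 \<in> carrier R" "s1 \<in> carrier R"
    "v2 \<in> carrier R" "w2 \<in> carrier R" "s2 \<in> carrier R"
    unfolding v1_def w1_def s1_def v2_def w2_def s2_def using c by simp_all
  have u1: "a0 \<ominus> a3 = \<ominus> (v1 \<oplus> w1 \<oplus> s1)"
    unfolding v1_def w1_def s1_def using c by Ring.algebra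
  have u2: "b0 \<ominus> b3 = \<ominus> (v2 \<oplus> w2 \<oplus> s2)"
    unfolding v2_def w2_def s2_def using c by Ring.algebra
  define u1' where "u1' = \<ominus> (v1 \<oplus> w1 \<oplus> s1)"
  define u2' where "u2' = \<ominus> (v2 \<oplus> w2 \<oplus> s2)"
  have cu: "u1' \<in> carrier R" "u2' \<in> carrier R" unfolding u1'_def u2'_def using cv by simp_all
  have g1: "v1 \<otimes> w1 \<oplus> v2 \<otimes> w2 = \<zero>" using h1 unfolding v1_def w1_def v2_def w2_def .
  have g2: "w1 \<otimes> s1 \<oplus> w2 \<otimes> s2 = \<zero>" using h2 unfolding s1_def w1_def s2_def w2_def .
  have g3: "s1 \<otimes> u1' \<oplus> s2 \<otimes> u2' = \<zero>" using h3 unfolding u1 u2 u1'_def[symmetric] u2'_def[symmetric]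
    unfolding s1_def s2_def .
  have g4: "u1' \<otimes> v1 \<oplus> u2' \<otimes> v2 = \<zero>" using h4 unfolding u1 u2 u1'_def[symmetric] u2'_def[symmetric]
    unfolding v1_def v2_def .
  have "(s1 \<oplus> v1) \<otimes> (s1 \<oplus> v1) \<oplus> (s2 \<oplus> v2) \<otimes> (s2 \<oplus> v2) =
     (\<ominus> (s1 \<otimes> u1') \<ominus> (w1 \<otimes> s1) \<ominus> (u1' \<otimes> v1) \<ominus> (v1 \<otimes> w1)) \<oplus>
     (\<ominus> (s2 \<otimes> u2') \<ominus> (w2 \<otimes> s2) \<ominus> (u2' \<otimes> v2) \<ominus> (v2 \<otimes> w2))"
    unfolding u1'_def u2'_def by (subst coord_id[OF cv(1-3)], subst coord_id[OF cv(4-6)], rule refl)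
  also have "\<dots> = \<ominus> (s1 \<otimes> u1' \<oplus> s2 \<otimes> u2') \<ominus> (w1 \<otimes> s1 \<oplus> w2 \<otimes> s2)
     \<ominus> (u1' \<otimes> v1 \<oplus> u2' \<otimes> v2) \<ominus> (v1 \<otimes> w1 \<oplus> v2 \<otimes> w2)"
    by (rule lin_id) (use cv cu in simp_all)
  also have "\<dots> = \<zero>" unfolding g1 g2 g3 g4 by (simp add: a_minus_def)
  finally have S: "(s1 \<oplus> v1) \<otimes> (s1 \<oplus> v1) \<oplus> (s2 \<oplus> v2) \<otimes> (s2 \<oplus> v2) = \<zero>" .
  have z: "s1 \<oplus> v1 = \<zero> \<and> s2 \<oplus> v2 = \<zero>"
    by (rule sq_sum_zero[OF ns _ _ S]) (use cv in simp_all)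
  have e: "a3 = (s1 \<oplus> v1) \<oplus> (a2 \<ominus> a1 \<oplus> a0)" "b3 = (s2 \<oplus> v2) \<oplus> (b2 \<ominus> b1 \<oplus> b0)"
    unfolding s1_def v1_def s2_def v2_def using c by Ring.algebra+
  have "a3 = a2 \<ominus> a1 \<oplus> a0" using e(1) z c by simp
  moreover have "b3 = b2 \<ominus> b1 \<oplus> b0" using e(2) z c by simp
  ultimately show ?thesis by simp
qed

lemma good_aux:
  assumes c: "v1 \<in> carrier R" "v2 \<in> carrier R" "a1 \<in> carrier R" "b1 \<in> carrier R"
     "p1 \<in> carrier R" "p2 \<in> carrier R" "d1 \<in> carrier R" "d2 \<in> carrier R"
     "t \<in> carrier R" "t' \<in> carrier R"
    and h: "v1 \<otimes> ((p1 \<oplus> t \<otimes> d1) \<ominus> a1) \<oplus> v2 \<otimes> ((p2 \<oplus> t \<otimes> d2) \<ominus> b1) = \<zero>"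
    and h': "v1 \<otimes> ((p1 \<oplus> t' \<otimes> d1) \<ominus> a1) \<oplus> v2 \<otimes> ((p2 \<oplus> t' \<otimes> d2) \<ominus> b1) = \<zero>"
    and tt: "t \<noteq> t'"
  shows "d1 \<otimes> v1 \<oplus> d2 \<otimes> v2 = \<zero> \<and> (p1 \<ominus> a1) \<otimes> v1 \<oplus> (p2 \<ominus> b1) \<otimes> v2 = \<zero>"
proof -
  define D where "D = d1 \<otimes> v1 \<oplus> d2 \<otimes> v2"
  define E where "E = (p1 \<ominus> a1) \<otimes> v1 \<oplus> (p2 \<ominus> b1) \<otimes> v2"
  have D: "D \<in> carrier R" and E: "E \<in> carrier R" unfolding D_def E_def using c by auto
  have e1: "v1 \<otimes> ((p1 \<oplus> t \<otimes> d1) \<ominus> a1) \<oplus> v2 \<otimes> ((p2 \<oplus> t \<otimes> d2) \<ominus> b1) = E \<oplus> t \<otimes> D"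
    unfolding D_def E_def using c by Ring.algebra
  have e2: "v1 \<otimes> ((p1 \<oplus> t' \<otimes> d1) \<ominus> a1) \<oplus> v2 \<otimes> ((p2 \<oplus> t' \<otimes> d2) \<ominus> b1) = E \<oplus> t' \<otimes> D"
    unfolding D_def E_def using c by Ring.algebra
  have "(t \<ominus> t') \<otimes> D = (E \<oplus> t \<otimes> D) \<ominus> (E \<oplus> t' \<otimes> D)" using c D E by Ring.algebra
  also have "\<dots> = \<zero> \<ominus> \<zero>" using h h' e1 e2 by simp
  also have "\<dots> = \<zero>" by (simp add: a_minus_def)
  finally have "(t \<ominus> t') \<otimes> D = \<zero>" .
  moreover have "t \<ominus> t' \<noteq> \<zero>" using tt c by (metis minus_equality r_neg a_minus_def add.inv_closed)
  ultimately have D0: "D = \<zero>" using integral c D by blast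
  then have "E = \<zero>" using h e1 c E by simp
  then show ?thesis using D0 unfolding D_def E_def by simp
qed

lemma bad_aux0:
  assumes ns: "\<not> (\<exists>x\<in>carrier R. x \<otimes> x = \<ominus> \<one>)"
    and c: "d1 \<in> carrier R" "d2 \<in> carrier R" "v1 \<in> carrier R" "v2 \<in> carrier R"
      "q1 \<in> carrier R" "q2 \<in> carrier R"
    and dnz: "\<not> (d1 = \<zero> \<and> d2 = \<zero>)" and vnz: "\<not> (v1 = \<zero> \<and> v2 = \<zero>)"
    and h1: "d1 \<otimes> v1 \<oplus> d2 \<otimes> v2 = \<zero>"
    and h2: "(q1 \<ominus> v1) \<otimes> v1 \<oplus> (q2 \<ominus> v2) \<otimes> v2 = \<zero>"
  shows "(d1 \<otimes> d1 \<oplus> d2 \<otimes> d2) \<otimes> v1 = \<ominus> ((q2 \<otimes> d1 \<ominus> q1 \<otimes> d2) \<otimes> d2)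
       \<and> (d1 \<otimes> d1 \<oplus> d2 \<otimes> d2) \<otimes> v2 = (q2 \<otimes> d1 \<ominus> q1 \<otimes> d2) \<otimes> d1"
proof -
  define N where "N = d1 \<otimes> d1 \<oplus> d2 \<otimes> d2"
  define a where "a = v2 \<otimes> d1 \<ominus> v1 \<otimes> d2"
  define cc where "cc = q2 \<otimes> d1 \<ominus> q1 \<otimes> d2"
  have N: "N \<in> carrier R" and aC: "a \<in> carrier R" and ccC: "cc \<in> carrier R"
    unfolding N_def a_def cc_def using c by auto
  have Nnz: "N \<noteq> \<zero>" using sq_sum_zero[OF ns c(1,2)] dnz unfolding N_def by blast
  have "N \<otimes> v1 = \<ominus> (a \<otimes> d2) \<oplus> (d1 \<otimes> v1 \<oplus> d2 \<otimes> v2) \<otimes> d1"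
    unfolding N_def a_def using c by Ring.algebra
  then have i1: "N \<otimes> v1 = \<ominus> (a \<otimes> d2)" using h1 c aC by simp
  have "N \<otimes> v2 = a \<otimes> d1 \<oplus> (d1 \<otimes> v1 \<oplus> d2 \<otimes> v2) \<otimes> d2"
    unfolding N_def a_def using c by Ring.algebra
  then have i2: "N \<otimes> v2 = a \<otimes> d1" using h1 c aC by simp
  have "N \<otimes> (v1 \<otimes> v1 \<oplus> v2 \<otimes> v2) = v1 \<otimes> (N \<otimes> v1) \<oplus> v2 \<otimes> (N \<otimes> v2)"
    using c N by Ring.algebra
  also have "\<dots> = a \<otimes> a" unfolding i1 i2 a_def using c by Ring.algebra
  finally have vv: "N \<otimes> (v1 \<otimes> v1 \<oplus> v2 \<otimes> v2) = a \<otimes> a" .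
  have "N \<otimes> (q1 \<otimes> v1 \<oplus> q2 \<otimes> v2) = q1 \<otimes> (N \<otimes> v1) \<oplus> q2 \<otimes> (N \<otimes> v2)"
    using c N by Ring.algebra
  also have "\<dots> = a \<otimes> cc" unfolding i1 i2 cc_def using c aC by Ring.algebra
  finally have qv: "N \<otimes> (q1 \<otimes> v1 \<oplus> q2 \<otimes> v2) = a \<otimes> cc" .
  have "q1 \<otimes> v1 \<oplus> q2 \<otimes> v2 = ((q1 \<ominus> v1) \<otimes> v1 \<oplus> (q2 \<ominus> v2) \<otimes> v2) \<oplus> (v1 \<otimes> v1 \<oplus> v2 \<otimes> v2)"
    using c by Ring.algebra
  then have "q1 \<otimes> v1 \<oplus> q2 \<otimes> v2 = v1 \<otimes> v1 \<oplus> v2 \<otimes> v2" using h2 c by simp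
  then have acc: "a \<otimes> cc = a \<otimes> a" using qv vv by simp
  have anz: "a \<noteq> \<zero>"
  proof
    assume "a = \<zero>"
    then have "N \<otimes> v1 = \<zero>" "N \<otimes> v2 = \<zero>" using i1 i2 c by auto
    then have "v1 = \<zero>" "v2 = \<zero>" using integral Nnz N c by blast+
    then show False using vnz by blast
  qed
  have "cc = a" using acc m_lcancel[OF anz aC ccC aC] by simp
  then show ?thesis using i1 i2 unfolding N_def cc_def by simp
qed

lemma bad_aux:
  assumes ns: "\<not> (\<exists>x\<in>carrier R. x \<otimes> x = \<ominus> \<one>)"
    and c: "d1 \<in> carrier R" "d2 \<in> carrier R" "v1 \<in> carrier R" "v2 \<in> carrier R"
      "w1 \<in> carrier R" "w2 \<in> carrier R" "q1 \<in> carrier R" "q2 \<in> carrier R"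
    and dnz: "\<not> (d1 = \<zero> \<and> d2 = \<zero>)" and vnz: "\<not> (v1 = \<zero> \<and> v2 = \<zero>)"
    and wnz: "\<not> (w1 = \<zero> \<and> w2 = \<zero>)"
    and h1: "d1 \<otimes> v1 \<oplus> d2 \<otimes> v2 = \<zero>"
    and h2: "(q1 \<ominus> v1) \<otimes> v1 \<oplus> (q2 \<ominus> v2) \<otimes> v2 = \<zero>"
    and h3: "d1 \<otimes> w1 \<oplus> d2 \<otimes> w2 = \<zero>"
    and h4: "(q1 \<ominus> w1) \<otimes> w1 \<oplus> (q2 \<ominus> w2) \<otimes> w2 = \<zero>"
  shows "v1 = w1 \<and> v2 = w2"
proof -
  have Nnz: "d1 \<otimes> d1 \<oplus> d2 \<otimes> d2 \<noteq> \<zero>" using sq_sum_zero[OF ns c(1,2)] dnz by blast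
  have N: "d1 \<otimes> d1 \<oplus> d2 \<otimes> d2 \<in> carrier R" using c by simp
  note A = bad_aux0[OF ns c(1-4,7,8) dnz vnz h1 h2]
  note B = bad_aux0[OF ns c(1,2,5,6,7,8) dnz wnz h3 h4]
  have e1: "(d1 \<otimes> d1 \<oplus> d2 \<otimes> d2) \<otimes> v1 = (d1 \<otimes> d1 \<oplus> d2 \<otimes> d2) \<otimes> w1"
    using A B by simp
  have e2: "(d1 \<otimes> d1 \<oplus> d2 \<otimes> d2) \<otimes> v2 = (d1 \<otimes> d1 \<oplus> d2 \<otimes> d2) \<otimes> w2"
    using A B by simp
  show ?thesis using e1 e2 m_lcancel[OF Nnz N c(3) c(5)] m_lcancel[OF Nnz N c(4) c(6)] by blast
qed


lemma diff_zero_eq: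
  assumes "a \<in> carrier R" "b \<in> carrier R" "a \<ominus> b = \<zero>" shows "a = b"
proof -
  have "a = (a \<ominus> b) \<oplus> b" using assms(1,2) by Ring.algebra
  then show ?thesis using assms by simp
qed

lemma rect_pts:
  assumes ns: "\<not> (\<exists>x\<in>carrier R. x \<otimes> x = \<ominus> \<one>)"
    and c: "x0 \<in> carrier R \<times> carrier R" "x1 \<in> carrier R \<times> carrier R"
      "x2 \<in> carrier R \<times> carrier R" "x3 \<in> carrier R \<times> carrier R"
    and r: "rectangle R x0 x1 x2 x3"
  shows "x3 = (fst x2 \<ominus> fst x1 \<oplus> fst x0, snd x2 \<ominus> snd x1 \<oplus> snd x0)"
proof -
  obtain a0 b0 where x0: "x0 = (a0, b0)" by (cases x0)
  obtain a1 b1 where x1: "x1 = (a1, b1)" by (cases x1)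
  obtain a2 b2 where x2: "x2 = (a2, b2)" by (cases x2)
  obtain a3 b3 where x3: "x3 = (a3, b3)" by (cases x3)
  have cc: "a0 \<in> carrier R" "b0 \<in> carrier R" "a1 \<in> carrier R" "b1 \<in> carrier R"
    "a2 \<in> carrier R" "b2 \<in> carrier R" "a3 \<in> carrier R" "b3 \<in> carrier R"
    using c unfolding x0 x1 x2 x3 by simp_all
  have h: "(a1 \<ominus> a0) \<otimes> (a2 \<ominus> a1) \<oplus> (b1 \<ominus> b0) \<otimes> (b2 \<ominus> b1) = \<zero>"
    "(a2 \<ominus> a1) \<otimes> (a3 \<ominus> a2) \<oplus> (b2 \<ominus> b1) \<otimes> (b3 \<ominus> b2) = \<zero>"
    "(a3 \<ominus> a2) \<otimes> (a0 \<ominus> a3) \<oplus> (b3 \<ominus> b2) \<otimes> (b0 \<ominus> b3) = \<zero>"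
    "(a0 \<ominus> a3) \<otimes> (a1 \<ominus> a0) \<oplus> (b0 \<ominus> b3) \<otimes> (b1 \<ominus> b0) = \<zero>"
    using r unfolding x0 x1 x2 x3 rectangle_def corner_def dotp_def vsub_def by simp_all
  have "a3 = a2 \<ominus> a1 \<oplus> a0 \<and> b3 = b2 \<ominus> b1 \<oplus> b0" by (rule rect_aux[OF cc ns h])
  then show ?thesis unfolding x0 x1 x2 x3 by simp
qed

lemma good_pts:
  assumes c: "x0 \<in> carrier R \<times> carrier R" "x1 \<in> carrier R \<times> carrier R"
      "p \<in> carrier R \<times> carrier R" "d \<in> carrier R \<times> carrier R"
      "t \<in> carrier R" "t' \<in> carrier R"
    and e: "x2 = (fst p \<oplus> t \<otimes> fst d, snd p \<oplus> t \<otimes> snd d)"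
      "x2' = (fst p \<oplus> t' \<otimes> fst d, snd p \<oplus> t' \<otimes> snd d)"
    and h: "corner R x0 x1 x2" "corner R x0 x1 x2'" and ne: "x2 \<noteq> x2'"
  shows "dotp R d (vsub R x1 x0) = \<zero> \<and> dotp R (vsub R p x1) (vsub R x1 x0) = \<zero>"
proof -
  have tt: "t \<noteq> t'" using e ne by auto
  have cc: "fst x1 \<ominus> fst x0 \<in> carrier R" "snd x1 \<ominus> snd x0 \<in> carrier R"
    "fst x1 \<in> carrier R" "snd x1 \<in> carrier R" "fst p \<in> carrier R" "snd p \<in> carrier R"
    "fst d \<in> carrier R" "snd d \<in> carrier R" using c by auto
  have h1: "(fst x1 \<ominus> fst x0) \<otimes> ((fst p \<oplus> t \<otimes> fst d) \<ominus> fst x1) \<oplus>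
      (snd x1 \<ominus> snd x0) \<otimes> ((snd p \<oplus> t \<otimes> snd d) \<ominus> snd x1) = \<zero>"
    using h(1) unfolding e corner_def dotp_def vsub_def by simp
  have h2: "(fst x1 \<ominus> fst x0) \<otimes> ((fst p \<oplus> t' \<otimes> fst d) \<ominus> fst x1) \<oplus>
      (snd x1 \<ominus> snd x0) \<otimes> ((snd p \<oplus> t' \<otimes> snd d) \<ominus> snd x1) = \<zero>"
    using h(2) unfolding e corner_def dotp_def vsub_def by simp
  have "fst d \<otimes> (fst x1 \<ominus> fst x0) \<oplus> snd d \<otimes> (snd x1 \<ominus> snd x0) = \<zero> \<and>
    (fst p \<ominus> fst x1) \<otimes> (fst x1 \<ominus> fst x0) \<oplus> (snd p \<ominus> snd x1) \<otimes> (snd x1 \<ominus> snd x0) = \<zero>"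
    by (rule good_aux[OF cc c(5,6) h1 h2 tt])
  then show ?thesis unfolding dotp_def vsub_def by simp
qed

lemma bad_pts:
  assumes ns: "\<not> (\<exists>x\<in>carrier R. x \<otimes> x = \<ominus> \<one>)"
    and c: "x0 \<in> carrier R \<times> carrier R" "x1 \<in> carrier R \<times> carrier R"
      "y1 \<in> carrier R \<times> carrier R"
      "p \<in> carrier R \<times> carrier R" "d \<in> carrier R \<times> carrier R"
    and dnz: "d \<noteq> (\<zero>, \<zero>)" and n1: "x1 \<noteq> x0" and n2: "y1 \<noteq> x0"
    and h1: "dotp R d (vsub R x1 x0) = \<zero>" "dotp R (vsub R p x1) (vsub R x1 x0) = \<zero>"
    and h2: "dotp R d (vsub R y1 x0) = \<zero>" "dotp R (vsub R p y1) (vsub R y1 x0) = \<zero>"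
  shows "x1 = y1"
proof -
  obtain a0 b0 where x0: "x0 = (a0, b0)" by (cases x0)
  obtain a1 b1 where x1: "x1 = (a1, b1)" by (cases x1)
  obtain a2 b2 where y1: "y1 = (a2, b2)" by (cases y1)
  obtain p1 p2 where p: "p = (p1, p2)" by (cases p)
  obtain d1 d2 where d: "d = (d1, d2)" by (cases d)
  have cc: "a0 \<in> carrier R" "b0 \<in> carrier R" "a1 \<in> carrier R" "b1 \<in> carrier R"
    "a2 \<in> carrier R" "b2 \<in> carrier R" "p1 \<in> carrier R" "p2 \<in> carrier R"
    "d1 \<in> carrier R" "d2 \<in> carrier R" using c x0 x1 y1 p d by auto
  have r1: "p1 \<ominus> a1 = (p1 \<ominus> a0) \<ominus> (a1 \<ominus> a0)" "p2 \<ominus> b1 = (p2 \<ominus> b0) \<ominus> (b1 \<ominus> b0)"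
    "p1 \<ominus> a2 = (p1 \<ominus> a0) \<ominus> (a2 \<ominus> a0)" "p2 \<ominus> b2 = (p2 \<ominus> b0) \<ominus> (b2 \<ominus> b0)"
    using cc by Ring.algebra+
  have nz1: "\<not> (a1 \<ominus> a0 = \<zero> \<and> b1 \<ominus> b0 = \<zero>)"
  proof
    assume z: "a1 \<ominus> a0 = \<zero> \<and> b1 \<ominus> b0 = \<zero>"
    have "a1 = a0" using diff_zero_eq[OF cc(3) cc(1)] z by blast
    moreover have "b1 = b0" using diff_zero_eq[OF cc(4) cc(2)] z by blast
    ultimately show False using n1 x0 x1 by simp
  qed
  have nz2: "\<not> (a2 \<ominus> a0 = \<zero> \<and> b2 \<ominus> b0 = \<zero>)"
  proof
    assume z: "a2 \<ominus> a0 = \<zero> \<and> b2 \<ominus> b0 = \<zero>"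
    have "a2 = a0" using diff_zero_eq[OF cc(5) cc(1)] z by blast
    moreover have "b2 = b0" using diff_zero_eq[OF cc(6) cc(2)] z by blast
    ultimately show False using n2 x0 y1 by simp
  qed
  have dnz': "\<not> (d1 = \<zero> \<and> d2 = \<zero>)" using dnz d by simp
  have cc': "p1 \<ominus> a0 \<in> carrier R" "p2 \<ominus> b0 \<in> carrier R" "a1 \<ominus> a0 \<in> carrier R"
    "b1 \<ominus> b0 \<in> carrier R" "a2 \<ominus> a0 \<in> carrier R" "b2 \<ominus> b0 \<in> carrier R" using cc by simp_all
  have e1: "d1 \<otimes> (a1 \<ominus> a0) \<oplus> d2 \<otimes> (b1 \<ominus> b0) = \<zero>"
    using h1(1) unfolding x0 x1 d dotp_def vsub_def by simp
  have e2: "((p1 \<ominus> a0) \<ominus> (a1 \<ominus> a0)) \<otimes> (a1 \<ominus> a0) \<oplus> ((p2 \<ominus> b0) \<ominus> (b1 \<ominus> b0)) \<otimes> (b1 \<ominus> b0) = \<zero>"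
    using h1(2) unfolding x0 x1 p dotp_def vsub_def r1(1,2)[symmetric] by simp
  have e3: "d1 \<otimes> (a2 \<ominus> a0) \<oplus> d2 \<otimes> (b2 \<ominus> b0) = \<zero>"
    using h2(1) unfolding x0 y1 d dotp_def vsub_def by simp
  have e4: "((p1 \<ominus> a0) \<ominus> (a2 \<ominus> a0)) \<otimes> (a2 \<ominus> a0) \<oplus> ((p2 \<ominus> b0) \<ominus> (b2 \<ominus> b0)) \<otimes> (b2 \<ominus> b0) = \<zero>"
    using h2(2) unfolding x0 y1 p dotp_def vsub_def r1(3,4)[symmetric] by simp
  have q: "a1 \<ominus> a0 = a2 \<ominus> a0 \<and> b1 \<ominus> b0 = b2 \<ominus> b0"
    by (rule bad_aux[OF ns cc(9,10) cc'(3,4) cc'(5,6) cc'(1,2) dnz' nz1 nz2 e1 e2 e3 e4])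
  have r2: "a1 = (a1 \<ominus> a0) \<oplus> a0" "b1 = (b1 \<ominus> b0) \<oplus> b0"
     "a2 = (a2 \<ominus> a0) \<oplus> a0" "b2 = (b2 \<ominus> b0) \<oplus> b0" using cc by Ring.algebra+
  have "a1 = a2" using q r2(1,3) by simp
  moreover have "b1 = b2" using q r2(2,4) by simp
  ultimately show ?thesis using x1 y1 by simp
qed
end

theorem lemma4p3:
  fixes C0 :: real
  assumes "C0 \<ge> 1"
  shows "\<exists>C::real. \<forall>(R :: 'a ring) (k :: real) (A :: ('a \<times> 'a) set).
           field R \<and> finite (carrier R) \<and> odd_char R \<and>
           \<not> (\<exists>x\<in>carrier R. x \<otimes>\<^bsub>R\<^esub> x = \<ominus>\<^bsub>R\<^esub> \<one>\<^bsub>R\<^esub>) \<and>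
           A \<subseteq> carrier R \<times> carrier R \<and> k_regular R C0 k A
           \<longrightarrow> real (rect_count R A) \<le> C * real (card A) ^ 2 * k"
proof (intro exI[of _ "3 * C0"] allI impI)
  fix R :: "'a ring" and k :: real and A :: "('a \<times> 'a) set"
  assume H: "field R \<and> finite (carrier R) \<and> odd_char R \<and>
           \<not> (\<exists>x\<in>carrier R. x \<otimes>\<^bsub>R\<^esub> x = \<ominus>\<^bsub>R\<^esub> \<one>\<^bsub>R\<^esub>) \<and>
           A \<subseteq> carrier R \<times> carrier R \<and> k_regular R C0 k A"
  interpret field R using H by blast
  have ns: "\<not> (\<exists>x\<in>carrier R. x \<otimes>\<^bsub>R\<^esub> x = \<ominus>\<^bsub>R\<^esub> \<one>\<^bsub>R\<^esub>)" using H by blast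
  have AC: "A \<subseteq> carrier R \<times> carrier R" using H by blast
  have finA: "finite A" using H finite_subset[OF AC] by blast
  let ?n = "card A"
  show "real (rect_count R A) \<le> 3 * C0 * real (card A) ^ 2 * k"
  proof (cases "A = {}")
    case True
    have "{(x0, x1, x2, x3). x0 \<in> A \<and> x1 \<in> A \<and> x2 \<in> A \<and> x3 \<in> A \<and>
                            rectangle R x0 x1 x2 x3} = {}" (is "?S = {}") using True by auto
    show ?thesis unfolding rect_count_def \<open>?S = {}\<close> using True by simp
  next
    case Ane: False
    obtain L P where LP: "\<forall>l\<in>L. is_line R l" "k / C0 \<le> real (card L)" "real (card L) \<le> C0 * k"
      "A = (\<Union>l\<in>L. P l)" "\<forall>l\<in>L. \<forall>l'\<in>L. l \<noteq> l' \<longrightarrow> P l \<inter> P l' = {}"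
      "\<forall>l\<in>L. P l \<subseteq> l \<and> real (card A) / (C0 * k) \<le> real (card (P l)) \<and>
                    real (card (P l)) \<le> C0 * real (card A) / k"
      using conjunct2[OF conjunct2[OF conjunct2[OF conjunct2[OF conjunct2[OF H]]]]]
      unfolding k_regular_def by (elim conjE exE) (rule that; assumption)
    obtain x0 where "x0 \<in> A" using Ane by blast
    then obtain l0 where l0: "l0 \<in> L" "x0 \<in> P l0" using LP(4) by blast
    have "P l0 \<subseteq> A" using LP(4) l0 by blast
    then have finP: "finite (P l0)" using finA by (rule finite_subset)
    have "P l0 \<noteq> {}" using l0 by blast
    then have "card (P l0) > 0" using finP by (simp add: card_gt_0_iff)
    then have r1: "real (card (P l0)) \<ge> 1" by simp
    have "real (card (P l0)) \<le> C0 * real ?n / k" using LP(6) l0(1) by blast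
    then have c1: "1 \<le> C0 * real ?n / k" using r1 by linarith
    have kpos: "k > 0"
    proof (rule ccontr)
      assume "\<not> k > 0"
      then have "C0 * real ?n / k \<le> 0" using assms
        by (intro divide_nonneg_nonpos) auto
      then show False using c1 by linarith
    qed
    have "k / C0 > 0" using kpos assms by simp
    then have "real (card L) > 0" using LP(2) by linarith
    then have cL0: "card L > 0" by simp
    then have finL: "finite L" using card_ge_0_finite by blast
    have cL: "card L \<ge> 1" using cL0 by simp
    have "\<forall>l\<in>L. \<exists>q. fst q \<in> carrier R \<times> carrier R \<and> snd q \<in> carrier R \<times> carrier R \<and>
       snd q \<noteq> (\<zero>\<^bsub>R\<^esub>, \<zero>\<^bsub>R\<^esub>) \<and>
       l = {(fst (fst q) \<oplus>\<^bsub>R\<^esub> t \<otimes>\<^bsub>R\<^esub> fst (snd q), snd (fst q) \<oplus>\<^bsub>R\<^esub> t \<otimes>\<^bsub>R\<^esub> snd (snd q)) | t. t \<in> carrier R}"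
    proof
      fix l assume "l \<in> L"
      then obtain pp vv where "pp \<in> carrier R \<times> carrier R" "vv \<in> carrier R \<times> carrier R"
        "vv \<noteq> (\<zero>\<^bsub>R\<^esub>, \<zero>\<^bsub>R\<^esub>)"
        "l = {(fst pp \<oplus>\<^bsub>R\<^esub> t \<otimes>\<^bsub>R\<^esub> fst vv, snd pp \<oplus>\<^bsub>R\<^esub> t \<otimes>\<^bsub>R\<^esub> snd vv) | t. t \<in> carrier R}"
        using bspec[OF LP(1) \<open>l \<in> L\<close>] unfolding is_line_def
        by (elim exE conjE) (rule that; assumption)
      then show "\<exists>q. fst q \<in> carrier R \<times> carrier R \<and> snd q \<in> carrier R \<times> carrier R \<and>
       snd q \<noteq> (\<zero>\<^bsub>R\<^esub>, \<zero>\<^bsub>R\<^esub>) \<and>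
       l = {(fst (fst q) \<oplus>\<^bsub>R\<^esub> t \<otimes>\<^bsub>R\<^esub> fst (snd q), snd (fst q) \<oplus>\<^bsub>R\<^esub> t \<otimes>\<^bsub>R\<^esub> snd (snd q)) | t. t \<in> carrier R}"
        by (intro exI[of _ "(pp, vv)"]) (unfold fst_conv snd_conv, intro conjI, assumption+)
    qed
    from bchoice[OF this] obtain f where f: "\<forall>l\<in>L. fst (f l) \<in> carrier R \<times> carrier R \<and> snd (f l) \<in> carrier R \<times> carrier R \<and>
       snd (f l) \<noteq> (\<zero>\<^bsub>R\<^esub>, \<zero>\<^bsub>R\<^esub>) \<and>
       l = {(fst (fst (f l)) \<oplus>\<^bsub>R\<^esub> t \<otimes>\<^bsub>R\<^esub> fst (snd (f l)), snd (fst (f l)) \<oplus>\<^bsub>R\<^esub> t \<otimes>\<^bsub>R\<^esub> snd (snd (f l))) | t. t \<in> carrier R}"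
      by (elim exE) (rule that)
    define p where "p l = fst (f l)" for l
    define d where "d l = snd (f l)" for l
    have pd: "p l \<in> carrier R \<times> carrier R" "d l \<in> carrier R \<times> carrier R" "d l \<noteq> (\<zero>\<^bsub>R\<^esub>, \<zero>\<^bsub>R\<^esub>)"
      "l = {(fst (p l) \<oplus>\<^bsub>R\<^esub> t \<otimes>\<^bsub>R\<^esub> fst (d l), snd (p l) \<oplus>\<^bsub>R\<^esub> t \<otimes>\<^bsub>R\<^esub> snd (d l)) | t. t \<in> carrier R}"
      if "l \<in> L" for l
    proof -
      note fl = bspec[OF f that]
      show "p l \<in> carrier R \<times> carrier R" unfolding p_def using conjunct1[OF fl] .
      show "d l \<in> carrier R \<times> carrier R" unfolding d_def using conjunct1[OF conjunct2[OF fl]] .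
      show "d l \<noteq> (\<zero>\<^bsub>R\<^esub>, \<zero>\<^bsub>R\<^esub>)" unfolding d_def
        using conjunct1[OF conjunct2[OF conjunct2[OF fl]]] .
      show "l = {(fst (p l) \<oplus>\<^bsub>R\<^esub> t \<otimes>\<^bsub>R\<^esub> fst (d l), snd (p l) \<oplus>\<^bsub>R\<^esub> t \<otimes>\<^bsub>R\<^esub> snd (d l)) | t. t \<in> carrier R}"
        unfolding p_def d_def using conjunct2[OF conjunct2[OF conjunct2[OF fl]]] .
    qed
    define bad where "bad l x0 x1 \<longleftrightarrow> dotp R (d l) (vsub R x1 x0) = \<zero>\<^bsub>R\<^esub> \<and>
        dotp R (vsub R (p l) x1) (vsub R x1 x0) = \<zero>\<^bsub>R\<^esub>" for l x0 x1
    define RS where "RS = {(x0, x1, x2, x3). x0 \<in> A \<and> x1 \<in> A \<and> x2 \<in> A \<and> x3 \<in> A \<and>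
                            rectangle R x0 x1 x2 x3}"
    define CT where "CT = {(x0, x1, x2). x0 \<in> A \<and> x1 \<in> A \<and> x2 \<in> A \<and> corner R x0 x1 x2}"
    define Dg where "Dg = (\<lambda>(a, b). (a, a, b)) ` (A \<times> A)"
    define Gl where "Gl l = {(x0, x1, x2). x0 \<in> A \<and> x1 \<in> A \<and> x2 \<in> P l \<and> x0 \<noteq> x1 \<and>
        corner R x0 x1 x2 \<and> \<not> bad l x0 x1}" for l
    define B where "B = {(x0, x1, x2). x0 \<in> A \<and> x1 \<in> A \<and> x2 \<in> A \<and> x0 \<noteq> x1 \<and>
        (\<exists>l\<in>L. x2 \<in> P l \<and> bad l x0 x1)}"
    have finAAA: "finite (A \<times> A \<times> A)" using finA by simp
    have finCT: "finite CT" by (rule finite_subset[OF _ finAAA]) (auto simp: CT_def)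
    have step1: "card RS \<le> card CT"
    proof (rule card_inj_on_le[of "\<lambda>(x0, x1, x2, x3). (x0, x1, x2)"])
      show "inj_on (\<lambda>(x0, x1, x2, x3). (x0, x1, x2)) RS"
      proof (rule inj_onI)
        fix u u' assume u: "u \<in> RS" and u': "u' \<in> RS"
          and eq: "(\<lambda>(x0, x1, x2, x3). (x0, x1, x2)) u = (\<lambda>(x0, x1, x2, x3). (x0, x1, x2)) u'"
        obtain x0 x1 x2 x3 where uu: "u = (x0, x1, x2, x3)" by (cases u) auto
        obtain y0 y1 y2 y3 where uu': "u' = (y0, y1, y2, y3)" by (cases u') auto
        have a: "x0 \<in> A" "x1 \<in> A" "x2 \<in> A" "x3 \<in> A" "rectangle R x0 x1 x2 x3"
          using u unfolding uu RS_def by auto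
        have b: "y0 \<in> A" "y1 \<in> A" "y2 \<in> A" "y3 \<in> A" "rectangle R y0 y1 y2 y3"
          using u' unfolding uu' RS_def by auto
        have e: "y0 = x0" "y1 = x1" "y2 = x2" using eq unfolding uu uu' by auto
        have "x3 = (fst x2 \<ominus>\<^bsub>R\<^esub> fst x1 \<oplus>\<^bsub>R\<^esub> fst x0, snd x2 \<ominus>\<^bsub>R\<^esub> snd x1 \<oplus>\<^bsub>R\<^esub> snd x0)"
          by (rule rect_pts[OF ns _ _ _ _ a(5)]) (use a AC in auto)
        moreover have "y3 = (fst y2 \<ominus>\<^bsub>R\<^esub> fst y1 \<oplus>\<^bsub>R\<^esub> fst y0, snd y2 \<ominus>\<^bsub>R\<^esub> snd y1 \<oplus>\<^bsub>R\<^esub> snd y0)"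
          by (rule rect_pts[OF ns _ _ _ _ b(5)]) (use b AC in auto)
        ultimately show "u = u'" unfolding uu uu' using e by simp
      qed
      show "(\<lambda>(x0, x1, x2, x3). (x0, x1, x2)) ` RS \<subseteq> CT"
        by (auto simp: RS_def CT_def rectangle_def)
    qed (rule finCT)
    have sub: "CT \<subseteq> Dg \<union> (\<Union>l\<in>L. Gl l) \<union> B"
    proof
      fix u assume u: "u \<in> CT"
      obtain x0 x1 x2 where uu: "u = (x0, x1, x2)" by (cases u) auto
      have a: "x0 \<in> A" "x1 \<in> A" "x2 \<in> A" "corner R x0 x1 x2" using u unfolding uu CT_def by auto
      show "u \<in> Dg \<union> (\<Union>l\<in>L. Gl l) \<union> B"
      proof (cases "x0 = x1")
        case True
        have "u \<in> Dg" unfolding uu Dg_def True using a by force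
        then show ?thesis by blast
      next
        case False
        obtain l where l: "l \<in> L" "x2 \<in> P l" using a LP(4) by blast
        show ?thesis
        proof (cases "bad l x0 x1")
          case True
          have "u \<in> B" unfolding uu B_def using a l False True by blast
          then show ?thesis by blast
        next
          case nb: False
          have "u \<in> Gl l" unfolding uu Gl_def using a l False nb by blast
          then show ?thesis using l by blast
        qed
      qed
    qed
    have finU: "finite (Dg \<union> (\<Union>l\<in>L. Gl l) \<union> B)"
      by (rule finite_subset[OF _ finAAA]) (use LP(4) in \<open>auto simp: Dg_def Gl_def B_def\<close>)
    have cDg: "card Dg \<le> ?n ^ 2"
      unfolding Dg_def using card_image_le[of "A \<times> A" "\<lambda>(a, b). (a, a, b)"] finA
      by (simp add: card_cartesian_product power2_eq_square)
    have cGl: "card (Gl l) \<le> ?n ^ 2" if lL: "l \<in> L" for l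
    proof -
      have "card (Gl l) \<le> card (A \<times> A)"
      proof (rule card_inj_on_le[of "\<lambda>(x0, x1, x2). (x0, x1)"])
        show "inj_on (\<lambda>(x0, x1, x2). (x0, x1)) (Gl l)"
        proof (rule inj_onI)
          fix u u' assume u: "u \<in> Gl l" and u': "u' \<in> Gl l"
            and eq: "(\<lambda>(x0, x1, x2). (x0, x1)) u = (\<lambda>(x0, x1, x2). (x0, x1)) u'"
          obtain x0 x1 x2 where uu: "u = (x0, x1, x2)" by (cases u) auto
          obtain y0 y1 y2 where uu': "u' = (y0, y1, y2)" by (cases u') auto
          have e: "y0 = x0" "y1 = x1" using eq unfolding uu uu' by auto
          have a: "x0 \<in> A" "x1 \<in> A" "x2 \<in> P l" "x0 \<noteq> x1" "corner R x0 x1 x2"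
            "\<not> bad l x0 x1" "y2 \<in> P l" "corner R x0 x1 y2"
            using u u' unfolding uu uu' Gl_def e by auto
          have "x2 = y2"
          proof (rule ccontr)
            assume ne: "x2 \<noteq> y2"
            have "x2 \<in> l" "y2 \<in> l" using a LP(6) lL by auto
            then obtain t t' where t: "t \<in> carrier R" "t' \<in> carrier R"
              "x2 = (fst (p l) \<oplus>\<^bsub>R\<^esub> t \<otimes>\<^bsub>R\<^esub> fst (d l), snd (p l) \<oplus>\<^bsub>R\<^esub> t \<otimes>\<^bsub>R\<^esub> snd (d l))"
              "y2 = (fst (p l) \<oplus>\<^bsub>R\<^esub> t' \<otimes>\<^bsub>R\<^esub> fst (d l), snd (p l) \<oplus>\<^bsub>R\<^esub> t' \<otimes>\<^bsub>R\<^esub> snd (d l))"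
              using pd(4)[OF lL] by blast
            have "bad l x0 x1"
              unfolding bad_def
              by (rule good_pts[OF _ _ pd(1,2)[OF lL] t(1,2) t(3,4) a(5,8) ne])
                 (use a AC in auto)
            then show False using a by blast
          qed
          then show "u = u'" unfolding uu uu' using e by simp
        qed
        show "(\<lambda>(x0, x1, x2). (x0, x1)) ` Gl l \<subseteq> A \<times> A" by (auto simp: Gl_def)
      qed (use finA in simp)
      then show ?thesis by (simp add: card_cartesian_product power2_eq_square)
    qed
    have cG: "card (\<Union>l\<in>L. Gl l) \<le> card L * ?n ^ 2"
    proof -
      have "card (\<Union>l\<in>L. Gl l) \<le> (\<Sum>l\<in>L. card (Gl l))" by (rule card_UN_le[OF finL])
      also have "\<dots> \<le> (\<Sum>l\<in>L. ?n ^ 2)" by (rule sum_mono) (rule cGl)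
      finally show ?thesis by simp
    qed
    have cB: "card B \<le> ?n ^ 2"
    proof -
      have "card B \<le> card (A \<times> A)"
      proof (rule card_inj_on_le[of "\<lambda>(x0, x1, x2). (x0, x2)"])
        show "inj_on (\<lambda>(x0, x1, x2). (x0, x2)) B"
        proof (rule inj_onI)
          fix u u' assume u: "u \<in> B" and u': "u' \<in> B"
            and eq: "(\<lambda>(x0, x1, x2). (x0, x2)) u = (\<lambda>(x0, x1, x2). (x0, x2)) u'"
          obtain x0 x1 x2 where uu: "u = (x0, x1, x2)" by (cases u) auto
          obtain y0 y1 y2 where uu': "u' = (y0, y1, y2)" by (cases u') auto
          have e: "y0 = x0" "y2 = x2" using eq unfolding uu uu' by auto
          obtain l where "x0 \<in> A" "x1 \<in> A" "x2 \<in> A" "x0 \<noteq> x1" "l \<in> L" "x2 \<in> P l" "bad l x0 x1"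
            using u unfolding uu B_def by blast
          moreover obtain l' where "y1 \<in> A" "x0 \<noteq> y1" "l' \<in> L" "x2 \<in> P l'" "bad l' x0 y1"
            using u' unfolding uu' B_def e by blast
          ultimately have a: "x0 \<in> A" "x1 \<in> A" "x2 \<in> A" "x0 \<noteq> x1" "l \<in> L" "x2 \<in> P l" "bad l x0 x1"
            "y1 \<in> A" "x0 \<noteq> y1" "l' \<in> L" "x2 \<in> P l'" "bad l' x0 y1" by blast+
          have "l = l'" using LP(5) a by blast
          have b1: "dotp R (d l) (vsub R x1 x0) = \<zero>\<^bsub>R\<^esub>" "dotp R (vsub R (p l) x1) (vsub R x1 x0) = \<zero>\<^bsub>R\<^esub>"
            using a(7) unfolding bad_def by auto
          have b2: "dotp R (d l) (vsub R y1 x0) = \<zero>\<^bsub>R\<^esub>" "dotp R (vsub R (p l) y1) (vsub R y1 x0) = \<zero>\<^bsub>R\<^esub>"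
            using a(12) \<open>l = l'\<close> unfolding bad_def by auto
          have "x1 = y1"
            by (rule bad_pts[OF ns _ _ _ pd(1,2)[OF a(5)] pd(3)[OF a(5)] _ _ b1 b2])
               (use a AC in auto)
          then show "u = u'" unfolding uu uu' using e by simp
        qed
        show "(\<lambda>(x0, x1, x2). (x0, x2)) ` B \<subseteq> A \<times> A" by (auto simp: B_def)
      qed (use finA in simp)
      then show ?thesis by (simp add: card_cartesian_product power2_eq_square)
    qed
    have "rect_count R A = card RS" unfolding rect_count_def RS_def by simp
    also have "\<dots> \<le> card CT" by (rule step1)
    also have "\<dots> \<le> card (Dg \<union> (\<Union>l\<in>L. Gl l) \<union> B)" by (rule card_mono[OF finU sub])
    also have "\<dots> \<le> card (Dg \<union> (\<Union>l\<in>L. Gl l)) + card B" by (rule card_Un_le)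
    also have "\<dots> \<le> card Dg + card (\<Union>l\<in>L. Gl l) + card B"
      using card_Un_le[of Dg "\<Union>l\<in>L. Gl l"] by linarith
    also have "\<dots> \<le> ?n ^ 2 + card L * ?n ^ 2 + ?n ^ 2" using cDg cG cB by linarith
    finally have nat: "rect_count R A \<le> ?n ^ 2 + card L * ?n ^ 2 + ?n ^ 2" .
    then have "real (rect_count R A) \<le> real (?n ^ 2 + card L * ?n ^ 2 + ?n ^ 2)"
      by (simp only: of_nat_le_iff)
    also have "\<dots> = (real (card L) + 2) * real ?n ^ 2" by (simp add: algebra_simps)
    finally have main: "real (rect_count R A) \<le> (real (card L) + 2) * real ?n ^ 2" .
    have "real (card L) + 2 \<le> 3 * C0 * k" using LP(3) cL by simp
    then have "(real (card L) + 2) * real ?n ^ 2 \<le> (3 * C0 * k) * real ?n ^ 2"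
      by (rule mult_right_mono) simp
    with main show ?thesis by (simp add: algebra_simps)
  qed
qed

end
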